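(* Let $i_{\max}=\max_k i_k$ and, for $0\le i\le i_{\max}$, $m_i=\sum_{k=1}^s\min(i,i_k)$ (so $0=m_0<m_1<\dots<m_{i_{\max}}=n$). For every $j\in\{1,\dots,n\}$, the integer $j-\deg_{\mathfrak n^-}F_j$ is the unique $i\in\{1,\dots,i_{\max}\}$ with $m_{i-1}<j\le m_i$. Equivalently, $\deg_{\mathfrak n^-}F_1=0$ and for $1\le j\le n-1$: $\deg_{\mathfrak n^-}F_{j+1}=\deg_{\mathfrak n^-}F_j$ if $j=m_i$ for some $i\in\{0,\dots,i_{\max}-1\}$, and $\deg_{\mathfrak n^-}F_{j+1}=\deg_{\mathfrak n^-}F_j+1$ otherwise.
   Context: Setup (parabolic contractions of $\mathfrak{gl}_n$). Let $\mathbb C$ be an algebraically closed field of characteristic $0$ and $n\ge 2$. Let $e_{p,q}$ ($1\le p,q\le n$) be the elementary matrices of $\mathfrak{gl}_n$ and $I=\{1,\dots,n\}$. Fix integers $0=\iota_0<\iota_1<\dots<\iota_{s-1}<\iota_s=n$ with $s\ge 2$. Put $I_k=\{\iota_{k-1}+1,\dots,\iota_k\}$, $i_k=|I_k|$ ($1\le k\le s$), and for $x\in I$ let $k(x)$ be the index with $x\in I_k$. Let $\mathfrak p=\operatorname{span}\{e_{p,q}: k(p)\le k(q)\}$ and $\mathfrak n^-=\operatorname{span}\{e_{p,q}: k(p)>k(q)\}$. The parabolic contraction $\mathfrak q=\mathfrak p\ltimes\mathfrak n^-$ is the vector space $\mathfrak{gl}_n$ with the Lie bracket $[p_1,p_2]=p_1p_2-p_2p_1$,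 $[p,x]=\pi_{\mathfrak n^-}(px-xp)$, $[x,y]=0$ for $p,p_1,p_2\in\mathfrak p$, $x,y\in\mathfrak n^-$, where $\pi_{\mathfrak n^-}$ is the projection onto $\mathfrak n^-$ along $\mathfrak p$. $S(\mathfrak q)$ is the polynomial algebra in the $e_{p,q}$. The $\mathfrak n^-$-degree of a monomial in the $e_{p,q}$ is the number of its factors lying in $\mathfrak n^-$; $\deg_{\mathfrak n^-}F$ is the maximum over monomials of $F$. For $J\subset I$, $\Delta_J=\sum_{\sigma\in\mathfrak S(J)}\varepsilon(\sigma)\prod_{l\in J}e_{l,\sigma(l)}$, and $F_j=\sum_{|J|=j}\Delta_J$. *)

theory Defs
  imports "HOL-Library.Poly_Mapping" "HOL-Combinatorics.Permutations"
begin

text \<open>Block data: iota :: nat => nat with iota 0 = 0 < iota 1 < ... < iota s = n.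
  Variables e_{p,q} are indexed by pairs (p,q); monomials are finitely supported
  exponent maps (nat * nat) =>0 nat; polynomials are finitely supported maps from
  monomials to coefficients.\<close>

definition blk :: "(nat \<Rightarrow> nat) \<Rightarrow> nat \<Rightarrow> nat" where
  "blk iota x = (LEAST k. x \<le> iota k)"

definition blksize :: "(nat \<Rightarrow> nat) \<Rightarrow> nat \<Rightarrow> nat" where
  "blksize iota k = iota k - iota (k - 1)"

definition imax :: "(nat \<Rightarrow> nat) \<Rightarrow> nat \<Rightarrow> nat" where
  "imax iota s = Max (blksize iota ` {1..s})"

definition mseq :: "(nat \<Rightarrow> nat) \<Rightarrow> nat \<Rightarrow> nat \<Rightarrow> nat" where
  "mseq iota s i = (\<Sum>k=1..s. min i (blksize iota k))"

definition permmon :: "nat set \<Rightarrow> (nat \<Rightarrow> nat) \<Rightarrow> (nat \<times> nat) \<Rightarrow>\<^sub>0 nat" where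
  "permmon J \<sigma> = (\<Sum>l\<in>J. Poly_Mapping.single (l, \<sigma> l) 1)"

definition Delta :: "nat set \<Rightarrow> ((nat \<times> nat) \<Rightarrow>\<^sub>0 nat) \<Rightarrow>\<^sub>0 'a::comm_ring_1" where
  "Delta J = (\<Sum>\<sigma>\<in>{\<sigma>. \<sigma> permutes J}. Poly_Mapping.single (permmon J \<sigma>) (of_int (sign \<sigma>)))"

definition Fpol :: "nat \<Rightarrow> nat \<Rightarrow> ((nat \<times> nat) \<Rightarrow>\<^sub>0 nat) \<Rightarrow>\<^sub>0 'a::comm_ring_1" where
  "Fpol n j = (\<Sum>J\<in>{J. J \<subseteq> {1..n} \<and> card J = j}. Delta J)"

definition mon_ndeg :: "(nat \<Rightarrow> nat) \<Rightarrow> ((nat \<times> nat) \<Rightarrow>\<^sub>0 nat) \<Rightarrow> nat" where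
  "mon_ndeg iota m = (\<Sum>pq\<in>Poly_Mapping.keys m. if blk iota (fst pq) > blk iota (snd pq) then Poly_Mapping.lookup m pq else 0)"

definition ndeg :: "(nat \<Rightarrow> nat) \<Rightarrow> (((nat \<times> nat) \<Rightarrow>\<^sub>0 nat) \<Rightarrow>\<^sub>0 'a::zero) \<Rightarrow> nat" where
  "ndeg iota F = Max (mon_ndeg iota ` Poly_Mapping.keys F)"

end

theory Submission
  imports Defs "HOL-Combinatorics.Cycles"
begin



locale blocks =
  fixes n s :: nat and iota :: "nat \<Rightarrow> nat"
  assumes s1: "s \<ge> 1" and i0: "iota 0 = 0" and iS: "iota s = n"
    and inc: "\<And>k. k < s \<Longrightarrow> iota k < iota (Suc k)"
begin

abbreviation "bk \<equiv> blk iota"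
abbreviation "bs \<equiv> blksize iota"
definition pos :: "nat \<Rightarrow> nat" where "pos x = x - iota (bk x - 1)"

lemma smono: "a < b \<Longrightarrow> b \<le> s \<Longrightarrow> iota a < iota b"
proof (induction b)
  case 0 then show ?case by simp
next
  case (Suc b)
  then show ?case using inc[of b] by (cases "a = b") auto
qed

lemma wmono: "a \<le> b \<Longrightarrow> b \<le> s \<Longrightarrow> iota a \<le> iota b"
  using smono[of a b] by (cases "a = b") auto

lemma blk_facts:
  assumes "x \<in> {1..n}"
  shows "1 \<le> bk x" "bk x \<le> s" "iota (bk x - 1) < x" "x \<le> iota (bk x)"
proof -
  have ex: "x \<le> iota s" using assms iS by simp
  show "x \<le> iota (bk x)" unfolding blk_def by (rule LeastI[of _ s]) (rule ex)
  show "bk x \<le> s" unfolding blk_def by (rule Least_le) (rule ex)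
  show "1 \<le> bk x" using \<open>x \<le> iota (bk x)\<close> assms i0 by (cases "bk x") auto
  show "iota (bk x - 1) < x"
  proof -
    have "\<not> x \<le> iota (bk x - 1)" unfolding blk_def
      by (rule not_less_Least) (use \<open>1 \<le> bk x\<close> in \<open>simp add: blk_def\<close>)
    then show ?thesis by simp
  qed
qed

lemma blk_eq:
  assumes "k \<in> {1..s}" "iota (k - 1) < x" "x \<le> iota k"
  shows "bk x = k"
  unfolding blk_def
proof (rule Least_equality)
  show "x \<le> iota k" by fact
  fix y assume "x \<le> iota y"
  show "k \<le> y"
  proof (rule ccontr)
    assume "\<not> k \<le> y"
    then have "iota y \<le> iota (k - 1)" using assms by (intro wmono) auto
    then show False using assms \<open>x \<le> iota y\<close> by simp
  qed
qed

lemma blk_mono: "y \<le> x \<Longrightarrow> x \<le> n \<Longrightarrow> bk y \<le> bk x"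
proof -
  assume "y \<le> x" "x \<le> n"
  have "x \<le> iota (bk x)" unfolding blk_def by (rule LeastI[of _ s]) (use \<open>x \<le> n\<close> iS in simp)
  then have "y \<le> iota (bk x)" using \<open>y \<le> x\<close> by simp
  then show ?thesis unfolding blk_def by (rule Least_le)
qed

end



lemma orbit_bound:
  fixes \<sigma> :: "'b \<Rightarrow> 'b" and f :: "'b \<Rightarrow> nat"
  assumes fin: "finite J" and perm: "\<sigma> permutes J"
  shows "card {l\<in>J. f l = k} \<le> card {l\<in>J. f l \<le> f (\<sigma> l)}"
proof -
  define N where "N = {l\<in>J. f l \<le> f (\<sigma> l)}"
  have inJ: "(\<sigma> ^^ m) l \<in> J" if "l \<in> J" for l m
    using permutes_funpow[OF perm, of m] that by (simp add: permutes_in_image)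
  have desc: "(\<sigma> ^^ m) l \<in> J \<and> f ((\<sigma> ^^ m) l) + m \<le> f l"
    if "l \<in> J" "\<forall>m'<m. (\<sigma> ^^ m') l \<notin> N" for l m
    using that
  proof (induction m)
    case 0 then show ?case by simp
  next
    case (Suc m)
    then have IH: "(\<sigma> ^^ m) l \<in> J \<and> f ((\<sigma> ^^ m) l) + m \<le> f l" by auto
    have "(\<sigma> ^^ m) l \<notin> N" using Suc.prems by auto
    then have "f (\<sigma> ((\<sigma> ^^ m) l)) < f ((\<sigma> ^^ m) l)" using IH unfolding N_def by auto
    then show ?case using IH inJ[OF \<open>l \<in> J\<close>, of "Suc m"] by simp
  qed
  have ex: "\<exists>m. (\<sigma> ^^ m) l \<in> N" if "l \<in> J" for l
  proof (rule ccontr)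
    assume "\<not> ?thesis"
    then have "f ((\<sigma> ^^ (Suc (f l))) l) + Suc (f l) \<le> f l" using desc[OF that, of "Suc (f l)"] by auto
    then show False by simp
  qed
  define M where "M l = (LEAST m. (\<sigma> ^^ m) l \<in> N)" for l
  define g where "g l = (\<sigma> ^^ M l) l" for l
  have gN: "g l \<in> N" if "l \<in> J" for l
    unfolding g_def M_def using ex[OF that] by (rule LeastI_ex)
  have gd: "f ((\<sigma> ^^ m) l) + m \<le> f l" if "l \<in> J" "m \<le> M l" for l m
  proof -
    have "\<forall>m'<m. (\<sigma> ^^ m') l \<notin> N"
    proof (intro allI impI)
      fix m' assume "m' < m"
      then have "m' < (LEAST m. (\<sigma> ^^ m) l \<in> N)" using that(2) unfolding M_def by simp
      then show "(\<sigma> ^^ m') l \<notin> N" by (rule not_less_Least)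
    qed
    then show ?thesis using desc[OF that(1)] by blast
  qed
  have inj_pow: "inj (\<sigma> ^^ m)" for m using permutes_funpow[OF perm, of m] permutes_inj by blast
  have key: "l = l'" if "l \<in> J" "l' \<in> J" "f l = f l'" "g l = g l'" "M l \<le> M l'" for l l'
  proof -
    define d where "d = M l' - M l"
    have "(\<sigma> ^^ M l) ((\<sigma> ^^ d) l') = (\<sigma> ^^ M l) l"
    proof -
      have "(\<sigma> ^^ M l) ((\<sigma> ^^ d) l') = (\<sigma> ^^ (M l + d)) l'" by (simp add: funpow_add)
      also have "M l + d = M l'" using that(5) unfolding d_def by simp
      finally show ?thesis using that(4) unfolding g_def by simp
    qed
    then have eq: "(\<sigma> ^^ d) l' = l" using inj_pow[of "M l"] by (meson injD)
    have "f ((\<sigma> ^^ d) l') + d \<le> f l'" using gd[OF that(2), of d] unfolding d_def by simp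
    then have "d = 0" using eq that(3) by simp
    then show ?thesis using eq by simp
  qed
  have "inj_on g {l\<in>J. f l = k}"
  proof (rule inj_onI)
    fix l l' assume "l \<in> {l\<in>J. f l = k}" "l' \<in> {l\<in>J. f l = k}" "g l = g l'"
    then show "l = l'" using key[of l l'] key[of l' l] by (cases "M l \<le> M l'") auto
  qed
  moreover have "g ` {l\<in>J. f l = k} \<subseteq> N" using gN by auto
  moreover have "finite N" unfolding N_def using fin by simp
  ultimately have "card {l\<in>J. f l = k} \<le> card N" by (meson card_inj_on_le)
  then show ?thesis unfolding N_def .
qed




lemma lookup_permmon:
  assumes "finite J"
  shows "Poly_Mapping.lookup (permmon J \<sigma>) (a,b) = (if a \<in> J \<and> b = \<sigma> a then 1 else 0)"
proof -
  have "Poly_Mapping.lookup (permmon J \<sigma>) (a,b) = (\<Sum>l\<in>J. (if l = a then (if b = \<sigma> a then 1 else 0) else 0))"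
    unfolding permmon_def lookup_sum lookup_single when_def by (intro sum.cong) auto
  also have "\<dots> = (if a \<in> J \<and> b = \<sigma> a then 1 else 0)"
    using assms by (simp add: sum.delta')
  finally show ?thesis .
qed

lemma permmon_inj:
  assumes "finite J" "finite J'" "\<sigma> permutes J" "\<sigma>' permutes J'" "permmon J \<sigma> = permmon J' \<sigma>'"
  shows "J = J' \<and> \<sigma> = \<sigma>'"
proof -
  have L: "Poly_Mapping.lookup (permmon J \<sigma>) (a,b) = Poly_Mapping.lookup (permmon J' \<sigma>') (a,b)" for a b
    using assms(5) by simp
  have A: "a \<in> J' \<and> \<sigma> a = \<sigma>' a" if "a \<in> J" for a
  proof -
    have 1: "Poly_Mapping.lookup (permmon J \<sigma>) (a, \<sigma> a) = 1"
      using lookup_permmon[OF assms(1), of \<sigma> a "\<sigma> a"] that by simp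
    have 2: "Poly_Mapping.lookup (permmon J' \<sigma>') (a, \<sigma> a) = 1"
      using 1 assms(5) by simp
    have 3: "(if a \<in> J' \<and> \<sigma> a = \<sigma>' a then 1 else 0) = (1::nat)"
      using 2 lookup_permmon[OF assms(2), of \<sigma>' a "\<sigma> a"] by simp
    show ?thesis using 3 by (cases "a \<in> J' \<and> \<sigma> a = \<sigma>' a") auto
  qed
  have B: "a \<in> J" if "a \<in> J'" for a
  proof -
    have 1: "Poly_Mapping.lookup (permmon J' \<sigma>') (a, \<sigma>' a) = 1"
      using lookup_permmon[OF assms(2), of \<sigma>' a "\<sigma>' a"] that by simp
    have 2: "Poly_Mapping.lookup (permmon J \<sigma>) (a, \<sigma>' a) = 1"
      using 1 assms(5) by simp
    have 3: "(if a \<in> J \<and> \<sigma>' a = \<sigma> a then 1 else 0) = (1::nat)"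
      using 2 lookup_permmon[OF assms(1), of \<sigma> a "\<sigma>' a"] by simp
    show ?thesis using 3 by (cases "a \<in> J \<and> \<sigma>' a = \<sigma> a") auto
  qed
  have "J = J'" using A B by blast
  moreover have "\<sigma> = \<sigma>'"
  proof
    fix x show "\<sigma> x = \<sigma>' x"
    proof (cases "x \<in> J")
      case True then show ?thesis using A by blast
    next
      case False then show ?thesis using \<open>J = J'\<close> permutes_not_in[OF assms(3)] permutes_not_in[OF assms(4)] by simp
    qed
  qed
  ultimately show ?thesis by simp
qed

lemma lookup_Fpol:
  "Poly_Mapping.lookup (Fpol n j :: ((nat \<times> nat) \<Rightarrow>\<^sub>0 nat) \<Rightarrow>\<^sub>0 'a::comm_ring_1) m =
   (\<Sum>J\<in>{J. J \<subseteq> {1..n} \<and> card J = j}. \<Sum>\<sigma>\<in>{\<sigma>. \<sigma> permutes J}. if permmon J \<sigma> = m then of_int (sign \<sigma>) else 0)"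
  unfolding Fpol_def Delta_def lookup_sum lookup_single when_def by simp

lemma mon_ndeg_permmon:
  assumes "finite J"
  shows "mon_ndeg iota (permmon J \<sigma>) = card {l\<in>J. blk iota (\<sigma> l) < blk iota l}"
proof -
  have K: "Poly_Mapping.keys (permmon J \<sigma>) = (\<lambda>l. (l, \<sigma> l)) ` J"
    using lookup_permmon[OF assms] by (auto simp: in_keys_iff split: if_splits)
  have inj: "inj_on (\<lambda>l. (l, \<sigma> l)) J" by (auto intro: inj_onI)
  have "mon_ndeg iota (permmon J \<sigma>) = (\<Sum>l\<in>J. if blk iota (\<sigma> l) < blk iota l then 1 else 0)"
    unfolding mon_ndeg_def K sum.reindex[OF inj] using lookup_permmon[OF assms]
    by (intro sum.cong) auto
  also have "\<dots> = card {l\<in>J. blk iota (\<sigma> l) < blk iota l}"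
    using assms by (simp add: sum.inter_filter[symmetric])
  finally show ?thesis .
qed



lemma keys_Fpol:
  "m \<in> Poly_Mapping.keys (Fpol n j :: ((nat \<times> nat) \<Rightarrow>\<^sub>0 nat) \<Rightarrow>\<^sub>0 'a::field_char_0) \<longleftrightarrow>
   (\<exists>J \<sigma>. J \<subseteq> {1..n} \<and> card J = j \<and> \<sigma> permutes J \<and> m = permmon J \<sigma>)"
proof
  assume "m \<in> Poly_Mapping.keys (Fpol n j :: ((nat \<times> nat) \<Rightarrow>\<^sub>0 nat) \<Rightarrow>\<^sub>0 'a::field_char_0)"
  then have ne: "(\<Sum>J\<in>{J. J \<subseteq> {1..n} \<and> card J = j}. \<Sum>\<sigma>\<in>{\<sigma>. \<sigma> permutes J}. if permmon J \<sigma> = m then of_int (sign \<sigma>) else (0::'a)) \<noteq> 0"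
    unfolding in_keys_iff lookup_Fpol .
  obtain J where J: "J \<in> {J. J \<subseteq> {1..n} \<and> card J = j}"
    and ne2: "(\<Sum>\<sigma>\<in>{\<sigma>. \<sigma> permutes J}. if permmon J \<sigma> = m then of_int (sign \<sigma>) else (0::'a)) \<noteq> 0"
    using sum.not_neutral_contains_not_neutral[OF ne] by blast
  obtain \<sigma> where s1: "\<sigma> \<in> {\<sigma>. \<sigma> permutes J}" and s2: "(if permmon J \<sigma> = m then of_int (sign \<sigma>) else (0::'a)) \<noteq> 0"
    using sum.not_neutral_contains_not_neutral[OF ne2] by blast
  have "permmon J \<sigma> = m" using s2 by presburger
  then show "\<exists>J \<sigma>. J \<subseteq> {1..n} \<and> card J = j \<and> \<sigma> permutes J \<and> m = permmon J \<sigma>" using J s1 by blast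
next
  assume "\<exists>J \<sigma>. J \<subseteq> {1..n} \<and> card J = j \<and> \<sigma> permutes J \<and> m = permmon J \<sigma>"
  then obtain J0 \<sigma>0 where J0: "J0 \<subseteq> {1..n}" "card J0 = j" "\<sigma>0 permutes J0" "m = permmon J0 \<sigma>0" by blast
  have fin0: "finite J0" using J0(1) finite_subset by blast
  have inner: "(\<Sum>\<sigma>\<in>{\<sigma>. \<sigma> permutes J}. if permmon J \<sigma> = m then of_int (sign \<sigma>) else (0::'a))
      = (if J = J0 then of_int (sign \<sigma>0) else 0)" if "J \<in> {J. J \<subseteq> {1..n} \<and> card J = j}" for J
  proof -
    have finJ: "finite J" using that finite_subset by auto
    have "(\<Sum>\<sigma>\<in>{\<sigma>. \<sigma> permutes J}. if permmon J \<sigma> = m then of_int (sign \<sigma>) else (0::'a))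
        = (\<Sum>\<sigma>\<in>{\<sigma>. \<sigma> permutes J}. if \<sigma> = \<sigma>0 then (if J = J0 then of_int (sign \<sigma>0) else 0) else (0::'a))"
    proof (rule sum.cong)
      fix \<sigma> assume "\<sigma> \<in> {\<sigma>. \<sigma> permutes J}"
      then have "\<sigma> permutes J" by simp
      then have "permmon J \<sigma> = m \<longleftrightarrow> J = J0 \<and> \<sigma> = \<sigma>0"
        using permmon_inj[OF finJ fin0 _ J0(3)] J0(4) by blast
      then show "(if permmon J \<sigma> = m then of_int (sign \<sigma>) else (0::'a)) =
           (if \<sigma> = \<sigma>0 then (if J = J0 then of_int (sign \<sigma>0) else 0) else 0)" by auto
    qed simp
    also have "\<dots> = (if J = J0 then of_int (sign \<sigma>0) else 0)"
      using finite_permutations[OF finJ] J0(3) by (auto simp: sum.delta)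
    finally show ?thesis .
  qed
  have fin: "finite {J. J \<subseteq> {1..n} \<and> card J = j}" by (rule finite_subset[of _ "Pow {1..n}"]) auto
  have "Poly_Mapping.lookup (Fpol n j :: ((nat \<times> nat) \<Rightarrow>\<^sub>0 nat) \<Rightarrow>\<^sub>0 'a) m = of_int (sign \<sigma>0)"
    unfolding lookup_Fpol using inner J0 fin by (simp add: sum.delta)
  moreover have "(of_int (sign \<sigma>0) :: 'a) \<noteq> 0" by (simp add: sign_def)
  ultimately show "m \<in> Poly_Mapping.keys (Fpol n j :: ((nat \<times> nat) \<Rightarrow>\<^sub>0 nat) \<Rightarrow>\<^sub>0 'a::field_char_0)"
    by (simp add: in_keys_iff)
qed



context blocks begin

lemma fibre: assumes "k \<in> {1..s}"
  shows "{x\<in>{1..n}. bk x = k \<and> pos x \<le> i} = {iota (k-1)<..iota (k-1) + min i (bs k)}"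
proof -
  have b: "iota (k-1) < iota k" "iota k \<le> n" using assms smono[of "k-1" k] wmono[of k s] iS by auto
  show ?thesis
  proof (intro set_eqI iffI)
    fix x assume x: "x \<in> {x\<in>{1..n}. bk x = k \<and> pos x \<le> i}"
    then show "x \<in> {iota (k-1)<..iota (k-1) + min i (bs k)}"
      using blk_facts[of x] unfolding pos_def blksize_def by auto
  next
    fix x assume x: "x \<in> {iota (k-1)<..iota (k-1) + min i (bs k)}"
    then have "iota (k-1) < x" "x \<le> iota k" using b unfolding blksize_def by auto
    then have "bk x = k" using blk_eq assms by blast
    then show "x \<in> {x\<in>{1..n}. bk x = k \<and> pos x \<le> i}"
      using x b \<open>x \<le> iota k\<close> unfolding pos_def blksize_def by auto
  qed
qed

lemma card_part: "finite A \<Longrightarrow> f ` A \<subseteq> K \<Longrightarrow> finite K \<Longrightarrow> card A = (\<Sum>k\<in>K. card {x\<in>A. f x = k})"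
  using sum.group[of A K f "\<lambda>_. 1::nat"] by simp

lemma mseq_card: "mseq iota s i = card {x\<in>{1..n}. pos x \<le> i}"
proof -
  have "card {x\<in>{1..n}. pos x \<le> i} = (\<Sum>k\<in>{1..s}. card {x\<in>{x\<in>{1..n}. pos x \<le> i}. bk x = k})"
    by (rule card_part) (use blk_facts in auto)
  also have "\<dots> = (\<Sum>k\<in>{1..s}. min i (bs k))"
  proof (rule sum.cong)
    fix k assume k: "k \<in> {1..s}"
    have "{x\<in>{x\<in>{1..n}. pos x \<le> i}. bk x = k} = {x\<in>{1..n}. bk x = k \<and> pos x \<le> i}" by auto
    then show "card {x\<in>{x\<in>{1..n}. pos x \<le> i}. bk x = k} = min i (bs k)"
      using fibre[OF k] by simp
  qed simp
  finally show ?thesis unfolding mseq_def by simp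
qed

lemma bs_pos: "k \<in> {1..s} \<Longrightarrow> 1 \<le> bs k"
  using smono[of "k-1" k] unfolding blksize_def by auto

lemma imax_ge: "k \<in> {1..s} \<Longrightarrow> bs k \<le> imax iota s"
  unfolding imax_def by (rule Max_ge) auto

lemma imax_in: "\<exists>k\<in>{1..s}. bs k = imax iota s"
proof -
  have "Max (bs ` {1..s}) \<in> bs ` {1..s}" using s1 by (intro Max_in) auto
  then show ?thesis unfolding imax_def by (metis imageE)
qed

lemma imax_pos: "1 \<le> imax iota s"
  using imax_in bs_pos by force

lemma pos_le: "x \<in> {1..n} \<Longrightarrow> 1 \<le> pos x \<and> pos x \<le> imax iota s"
proof -
  assume x: "x \<in> {1..n}"
  note f = blk_facts[OF x]
  have "pos x \<le> bs (bk x)" unfolding pos_def blksize_def using f by auto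
  also have "\<dots> \<le> imax iota s" using f by (intro imax_ge) auto
  finally show ?thesis using f unfolding pos_def by auto
qed

lemma mseq0: "mseq iota s 0 = 0" unfolding mseq_def by simp

lemma mseq_max: "mseq iota s (imax iota s) = n"
  proof -
  have "{x\<in>{1..n}. pos x \<le> imax iota s} = {1..n}" using pos_le by auto
  then show ?thesis unfolding mseq_card by simp
qed

lemma mseq_mono: "a \<le> b \<Longrightarrow> mseq iota s a \<le> mseq iota s b"
  unfolding mseq_def by (intro sum_mono) auto

lemma mseq_strict: "1 \<le> i \<Longrightarrow> i \<le> imax iota s \<Longrightarrow> mseq iota s (i-1) < mseq iota s i"
  unfolding mseq_def
proof (rule sum_strict_mono_ex1)
  assume "1 \<le> i" "i \<le> imax iota s"
  obtain k where "k\<in>{1..s}" "bs k = imax iota s" using imax_in by blast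
  then show "\<exists>a\<in>{1..s}. min (i - 1) (bs a) < min i (bs a)" using \<open>1 \<le> i\<close> \<open>i \<le> imax iota s\<close> by force
qed auto

end



lemma keyle:
  fixes a b u v n :: nat
  assumes "u \<le> n" "v \<le> n" "a*(n+1)+u \<le> b*(n+1)+v" shows "a \<le> b"
proof (rule ccontr)
  assume "\<not> a \<le> b"
  then have "Suc b \<le> a" by simp
  then have "Suc b * (n+1) \<le> a * (n+1)" by (rule mult_le_mono1)
  then show False using assms by simp
qed

context blocks begin

lemma lower:
  assumes J: "J \<subseteq> {1..n}" and perm: "\<sigma> permutes J" and i: "1 \<le> i" "mseq iota s (i-1) < card J"
  shows "card {l\<in>J. bk (\<sigma> l) < bk l} + i \<le> card J"
proof -
  have fin: "finite J" using J finite_subset by blast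
  define N where "N = {l\<in>J. bk l \<le> bk (\<sigma> l)}"
  define t where "t = card N"
  have c: "card {l\<in>J. bk l = k} \<le> min t (bs k)" if k: "k \<in> {1..s}" for k
  proof -
    have "card {l\<in>J. bk l = k} \<le> t" unfolding t_def N_def by (rule orbit_bound[OF fin perm])
    moreover have "card {l\<in>J. bk l = k} \<le> card {x\<in>{1..n}. bk x = k \<and> pos x \<le> n}"
      proof (rule card_mono)
      show "{l\<in>J. bk l = k} \<subseteq> {x\<in>{1..n}. bk x = k \<and> pos x \<le> n}"
      proof
        fix x assume "x \<in> {l\<in>J. bk l = k}"
        then have "x \<in> {1..n}" "bk x = k" using J by auto
        moreover have "pos x \<le> x" unfolding pos_def by simp
        ultimately show "x \<in> {x\<in>{1..n}. bk x = k \<and> pos x \<le> n}" by auto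
      qed
    qed simp
    moreover have "card {x\<in>{1..n}. bk x = k \<and> pos x \<le> n} \<le> bs k" using fibre[OF k, of n] by simp
    ultimately show ?thesis by simp
  qed
  have "card J = (\<Sum>k\<in>{1..s}. card {l\<in>J. bk l = k})"
    by (rule card_part[OF fin]) (use J blk_facts in auto)
  also have "\<dots> \<le> mseq iota s t" unfolding mseq_def by (rule sum_mono) (use c in auto)
  finally have "card J \<le> mseq iota s t" .
  then have "i \<le> t" using i mseq_mono[of t "i-1"] by (cases "t \<le> i - 1") auto
  have "{l\<in>J. bk (\<sigma> l) < bk l} = J - N" unfolding N_def by auto
  then have "card {l\<in>J. bk (\<sigma> l) < bk l} = card J - t"
    unfolding t_def by (simp add: card_Diff_subset N_def fin)
  moreover have "t \<le> card J" unfolding t_def N_def by (rule card_mono[OF fin]) auto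
  ultimately show ?thesis using \<open>i \<le> t\<close> by simp
qed

definition key :: "nat \<Rightarrow> nat" where "key x = pos x * (n+1) + (n - x)"

lemma construct:
  assumes i: "1 \<le> i" "i \<le> imax iota s" and j: "j \<le> mseq iota s i"
  shows "\<exists>J \<sigma>. J \<subseteq> {1..n} \<and> card J = j \<and> \<sigma> permutes J \<and> j \<le> card {l\<in>J. bk (\<sigma> l) < bk l} + i"
proof -
  define A where "A = {x\<in>{1..n}. pos x \<le> i}"
  have "j \<le> card A" using j unfolding A_def mseq_card .
  then obtain J where JA: "J \<subseteq> A" and cJ: "card J = j" and fin: "finite J"
    by (meson obtain_subset_with_card_n)
  define L where "L = sort_key key (sorted_list_of_set J)"
  have setL: "set L = J" unfolding L_def using fin by simp
  have dL: "distinct L" unfolding L_def using fin by simp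
  have sL: "sorted (map key L)" unfolding L_def by simp
  define \<sigma> where "\<sigma> = cycle_of_list L"
  have perm: "\<sigma> permutes J" unfolding \<sigma>_def using cycle_permutes[of L] setL by simp
  have sig: "\<sigma> (L!p) = L!(Suc p mod length L)" if "p < length L" for p
  proof -
    have "map \<sigma> L = rotate1 L" unfolding \<sigma>_def using cyclic_rotation[OF dL, of 1] by simp
    then have "map \<sigma> L ! p = rotate1 L ! p" by simp
    then show ?thesis using that by (simp add: nth_rotate1)
  qed
  have JA': "x \<in> {1..n}" "pos x \<le> i" if "x \<in> J" for x using JA that unfolding A_def by auto
  define N where "N = {x\<in>J. bk x \<le> bk (\<sigma> x)}"
  have bad: False if pq: "p < q" "q < length L" and xN: "L!p \<in> N" and ps: "pos (L!p) = pos (L!q)" for p q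
  proof -
    define x where "x = L!p"
    define z where "z = L!Suc p"
    have pl: "Suc p < length L" using pq by simp
    have sx: "\<sigma> x = z" unfolding x_def z_def using sig[of p] pl by simp
    have xJ: "x \<in> J" "z \<in> J" "L!q \<in> J" unfolding x_def z_def using pq pl setL by auto
    have k1: "key x \<le> key z" unfolding x_def z_def using sorted_nth_mono[OF sL, of p "Suc p"] pl by simp
    have k2: "key z \<le> key (L!q)" unfolding z_def using sorted_nth_mono[OF sL, of "Suc p" q] pq by simp
    have le: "x \<le> n" "z \<le> n" "L!q \<le> n" using JA' xJ by auto
    have "pos x \<le> pos z" using keyle[of "n - x" n "n - z" "pos x" "pos z"] k1 unfolding key_def by simp
    moreover have "pos z \<le> pos (L!q)" using keyle[of "n - z" n "n - L!q" "pos z" "pos (L!q)"] k2 unfolding key_def by simp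
    ultimately have pz: "pos z = pos x" using ps unfolding x_def by simp
    then have "n - x \<le> n - z" using k1 unfolding key_def by simp
    then have "z \<le> x" using le by simp
    moreover have "z \<noteq> x" unfolding x_def z_def using dL pl nth_eq_iff_index_eq by fastforce
    ultimately have zx: "z < x" by simp
    have "bk z \<le> bk x" using blk_mono[of z x] zx le by simp
    moreover have "bk z \<noteq> bk x"
    proof
      assume "bk z = bk x"
      moreover have "iota (bk z - 1) < z" "iota (bk x - 1) < x" using blk_facts JA' xJ by auto
      ultimately show False using pz zx unfolding pos_def by simp
    qed
    ultimately have "bk (\<sigma> x) < bk x" using sx by simp
    then show False using xN unfolding N_def x_def by simp
  qed
  have "inj_on pos N"
  proof (rule inj_onI)
    fix x y assume xy: "x \<in> N" "y \<in> N" "pos x = pos y"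
    then obtain p q where p: "p < length L" "x = L!p" and q: "q < length L" "y = L!q"
      using setL unfolding N_def by (metis (no_types, lifting) in_set_conv_nth mem_Collect_eq)
    show "x = y"
    proof (cases p q rule: linorder_cases)
      case less then show ?thesis using bad[of p q] p q xy by simp
    next
      case greater then show ?thesis using bad[of q p] p q xy by simp
    qed (use p q in simp)
  qed
  moreover have "pos ` N \<subseteq> {1..i}" using JA' pos_le unfolding N_def by fastforce
  ultimately have cN: "card N \<le> i"
    by (metis card_atLeastAtMost card_inj_on_le diff_Suc_1 finite_atLeastAtMost)
  have "{l\<in>J. bk (\<sigma> l) < bk l} = J - N" unfolding N_def by auto
  then have "card {l\<in>J. bk (\<sigma> l) < bk l} = card J - card N"
    by (simp add: card_Diff_subset N_def fin)
  moreover have "card N \<le> card J" unfolding N_def by (rule card_mono[OF fin]) auto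
  ultimately have "j \<le> card {l\<in>J. bk (\<sigma> l) < bk l} + i" using cN cJ by simp
  moreover have "J \<subseteq> {1..n}" using JA' by auto
  ultimately show ?thesis using cJ perm by blast
qed

end



context blocks begin

lemma Dval:
  assumes j: "j \<in> {1..n}" and i: "i \<in> {1..imax iota s}" "mseq iota s (i-1) < j" "j \<le> mseq iota s i"
  shows "ndeg iota (Fpol n j :: ((nat \<times> nat) \<Rightarrow>\<^sub>0 nat) \<Rightarrow>\<^sub>0 'a::field_char_0) + i = j"
proof -
  define S where "S = mon_ndeg iota ` Poly_Mapping.keys (Fpol n j :: ((nat \<times> nat) \<Rightarrow>\<^sub>0 nat) \<Rightarrow>\<^sub>0 'a)"
  have finS: "finite S" unfolding S_def by simp
  obtain J \<sigma> where J: "J \<subseteq> {1..n}" "card J = j" "\<sigma> permutes J" "j \<le> card {l\<in>J. bk (\<sigma> l) < bk l} + i"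
    using construct[of i j] i by auto
  have finJ: "finite J" using J(1) finite_subset by blast
  have "permmon J \<sigma> \<in> Poly_Mapping.keys (Fpol n j :: ((nat \<times> nat) \<Rightarrow>\<^sub>0 nat) \<Rightarrow>\<^sub>0 'a)"
    using J by (auto simp: keys_Fpol)
  then have w: "card {l\<in>J. bk (\<sigma> l) < bk l} \<in> S"
    unfolding S_def using mon_ndeg_permmon[OF finJ] by (metis image_eqI)
  have ub: "x + i \<le> j" if "x \<in> S" for x
  proof -
    from that obtain m where m: "m \<in> Poly_Mapping.keys (Fpol n j :: ((nat \<times> nat) \<Rightarrow>\<^sub>0 nat) \<Rightarrow>\<^sub>0 'a)" "x = mon_ndeg iota m"
      unfolding S_def by blast
    then obtain J' \<sigma>' where J': "J' \<subseteq> {1..n}" "card J' = j" "\<sigma>' permutes J'" "m = permmon J' \<sigma>'"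
      by (auto simp: keys_Fpol)
    have "finite J'" using J'(1) finite_subset by blast
    then have "x = card {l\<in>J'. bk (\<sigma>' l) < bk l}" using m J' mon_ndeg_permmon by simp
    then show ?thesis using lower[OF J'(1) J'(3)] i J'(2) by simp
  qed
  have "Max S \<in> S" using finS w by (intro Max_in) auto
  then have "Max S + i \<le> j" by (rule ub)
  moreover have "card {l\<in>J. bk (\<sigma> l) < bk l} \<le> Max S" using finS w by (rule Max_ge)
  ultimately have "Max S + i = j" using J(4) by simp
  then show ?thesis unfolding ndeg_def S_def .
qed

lemma ex_i: "j \<in> {1..n} \<Longrightarrow> \<exists>i\<in>{1..imax iota s}. mseq iota s (i-1) < j \<and> j \<le> mseq iota s i"
proof -
  assume j: "j \<in> {1..n}"
  define i where "i = (LEAST i. j \<le> mseq iota s i)"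
  have "j \<le> mseq iota s (imax iota s)" using mseq_max j by simp
  then have a: "j \<le> mseq iota s i" "i \<le> imax iota s" unfolding i_def by (auto intro: LeastI Least_le)
  have "i \<noteq> 0" using a j mseq0 by (intro notI) simp
  moreover have "\<not> j \<le> mseq iota s (i-1)" unfolding i_def by (rule not_less_Least) (use \<open>i \<noteq> 0\<close> i_def in simp)
  ultimately show ?thesis using a by (intro bexI[of _ i]) auto
qed

lemma uniq_i:
  assumes "mseq iota s (i-1) < j" "j \<le> mseq iota s i" "mseq iota s (i'-1) < j" "j \<le> mseq iota s i'"
  shows "i = i'"
proof (rule ccontr)
  assume "i \<noteq> i'"
  then consider "i < i'" | "i' < i" by linarith
  then show False
  proof cases
    case 1
    have "mseq iota s i \<le> mseq iota s (i'-1)" by (rule mseq_mono) (use 1 in simp)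
    then show False using assms by simp
  next
    case 2
    have "mseq iota s i' \<le> mseq iota s (i-1)" by (rule mseq_mono) (use 2 in simp)
    then show False using assms by simp
  qed
qed

end

theorem mainTheorem2:
  fixes n s :: nat and iota :: "nat \<Rightarrow> nat"
  assumes "n \<ge> 2" and "s \<ge> 2"
    and "iota 0 = 0" and "iota s = n"
    and "\<And>k. k < s \<Longrightarrow> iota k < iota (Suc k)"
  defines "D \<equiv> \<lambda>j. ndeg iota (Fpol n j :: ((nat \<times> nat) \<Rightarrow>\<^sub>0 nat) \<Rightarrow>\<^sub>0 'a::field_char_0)"
  shows "(\<forall>j\<in>{1..n}. (\<exists>!i. i \<in> {1..imax iota s} \<and> mseq iota s (i - 1) < j \<and> j \<le> mseq iota s i)
            \<and> (\<forall>i\<in>{1..imax iota s}. mseq iota s (i - 1) < j \<and> j \<le> mseq iota s i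
                  \<longrightarrow> int j - int (D j) = int i))
       \<and> D 1 = 0
       \<and> (\<forall>j\<in>{1..n - 1}.
            ((\<exists>i\<in>{0..<imax iota s}. j = mseq iota s i) \<longrightarrow> D (j + 1) = D j)
          \<and> ((\<not> (\<exists>i\<in>{0..<imax iota s}. j = mseq iota s i)) \<longrightarrow> D (j + 1) = D j + 1))"
proof -
  interpret blocks n s iota using assms by unfold_locales auto
  have DV: "D j + i = j" if "j \<in> {1..n}" "i \<in> {1..imax iota s}" "mseq iota s (i-1) < j" "j \<le> mseq iota s i" for j i
    unfolding D_def using Dval[OF that] by simp
  have P1: "(\<exists>!i. i \<in> {1..imax iota s} \<and> mseq iota s (i - 1) < j \<and> j \<le> mseq iota s i)
            \<and> (\<forall>i\<in>{1..imax iota s}. mseq iota s (i - 1) < j \<and> j \<le> mseq iota s i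
                  \<longrightarrow> int j - int (D j) = int i)" if j: "j \<in> {1..n}" for j
  proof
    show "\<exists>!i. i \<in> {1..imax iota s} \<and> mseq iota s (i - 1) < j \<and> j \<le> mseq iota s i"
      using ex_i[OF j] uniq_i by blast
    show "\<forall>i\<in>{1..imax iota s}. mseq iota s (i - 1) < j \<and> j \<le> mseq iota s i \<longrightarrow> int j - int (D j) = int i"
      using DV[OF j] by force
  qed
  have P2: "D 1 = 0"
  proof -
    have "mseq iota s 0 < mseq iota s 1" using mseq_strict[of 1] imax_pos by simp
    then have "D 1 + 1 = 1" using DV[of 1 1] imax_pos assms(1) mseq0 by simp
    then show ?thesis by simp
  qed
  have P3: "((\<exists>i\<in>{0..<imax iota s}. j = mseq iota s i) \<longrightarrow> D (j + 1) = D j)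
          \<and> ((\<not> (\<exists>i\<in>{0..<imax iota s}. j = mseq iota s i)) \<longrightarrow> D (j + 1) = D j + 1)" if j: "j \<in> {1..n-1}" for j
  proof (intro conjI impI)
    assume "\<exists>i\<in>{0..<imax iota s}. j = mseq iota s i"
    then obtain i0 where i0: "i0 < imax iota s" "j = mseq iota s i0" by auto
    have "i0 \<noteq> 0" using i0 j mseq0 by (intro notI) simp
    have s1: "mseq iota s (i0 - 1) < mseq iota s i0" using mseq_strict[of i0] i0 \<open>i0 \<noteq> 0\<close> by simp
    have s2: "mseq iota s i0 < mseq iota s (i0+1)" using mseq_strict[of "i0+1"] i0 by simp
    have a: "D j + i0 = j" using DV[of j i0] j s1 i0 \<open>i0 \<noteq> 0\<close> by simp
    have j1: "j+1 \<in> {1..n}" using j by auto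
    have b: "D (j+1) + (i0+1) = j+1" by (rule DV[OF j1]) (use s2 i0 in auto)
    show "D (j + 1) = D j" using a b by simp
  next
    assume na: "\<not> (\<exists>i\<in>{0..<imax iota s}. j = mseq iota s i)"
    have jn: "j \<in> {1..n}" using j by auto
    obtain i where i: "i \<in> {1..imax iota s}" "mseq iota s (i-1) < j" "j \<le> mseq iota s i" using ex_i[OF jn] by blast
    have "j \<noteq> mseq iota s i"
    proof (cases "i < imax iota s")
      case True then show ?thesis using na by auto
    next
      case False then have "i = imax iota s" using i by simp
      then show ?thesis using mseq_max j assms(1) by auto
    qed
    then have "j + 1 \<le> mseq iota s i" using i by simp
    moreover have j1: "j+1 \<in> {1..n}" using j by auto
    ultimately have b: "D (j+1) + i = j + 1" using DV[OF j1 i(1)] i by simp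
    have a: "D j + i = j" using DV[OF jn i] .
    show "D (j + 1) = D j + 1" using a b by simp
  qed
  show ?thesis using P1 P2 P3 by blast
qed


end
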